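(* Let $G$ be a group and $\iota\in G$ an element for which there is a finite normal subgroup $L\lhd G$ such that the image of $\iota$ is central in $G/L$. If $M$ is a gr-odd $\mathbb{Q}[G]$-module, then the group homology $\mathrm{H}_i(G;M)$ vanishes for all $i\geq 0$. The same conclusion holds for group cohomology $\mathrm{H}^i(G;M)$.
   Context: A $\mathbb{Q}[G]$-module $M$ is odd if $\iota\cdot m=-m$ for all $m\in M$; it is gr-odd if it admits a finite filtration by $\mathbb{Q}[G]$-submodules $0=F_{-1}M\subseteq F_0M\subseteq\cdots\subseteq F_kM=M$ with each $F_{i+1}M/F_iM$ odd. *)

theory Defs
  imports "HOL-Algebra.Algebra"
begin

definition rat_rep :: "('g, 'b) monoid_scheme \<Rightarrow> (rat \<Rightarrow> 'm::ab_group_add \<Rightarrow> 'm) \<Rightarrow> ('g \<Rightarrow> 'm \<Rightarrow> 'm) \<Rightarrow> bool" where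
  "rat_rep G scl act \<longleftrightarrow>
     Modules.module scl \<and>
     (\<forall>g\<in>carrier G. \<forall>x y. act g (x + y) = act g x + act g y) \<and>
     (\<forall>g\<in>carrier G. \<forall>q x. act g (scl q x) = scl q (act g x)) \<and>
     (\<forall>x. act \<one>\<^bsub>G\<^esub> x = x) \<and>
     (\<forall>g\<in>carrier G. \<forall>h\<in>carrier G. \<forall>x. act (g \<otimes>\<^bsub>G\<^esub> h) x = act g (act h x))"

definition is_submodule :: "('g, 'b) monoid_scheme \<Rightarrow> (rat \<Rightarrow> 'm::ab_group_add \<Rightarrow> 'm) \<Rightarrow> ('g \<Rightarrow> 'm \<Rightarrow> 'm) \<Rightarrow> 'm set \<Rightarrow> bool" where
  "is_submodule G scl act S \<longleftrightarrow>
     0 \<in> S \<and> (\<forall>x\<in>S. \<forall>y\<in>S. x + y \<in> S) \<and> (\<forall>q. \<forall>x\<in>S. scl q x \<in> S) \<and>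
     (\<forall>g\<in>carrier G. \<forall>x\<in>S. act g x \<in> S)"

text \<open>gr-odd: a finite filtration 0 = F(-1) \<subseteq> F 0 \<subseteq> ... \<subseteq> F k = M by submodules whose
  successive quotients are odd (iota acts as -1 on F(i+1)/F(i), i.e. iota m + m \<in> F i).\<close>
definition gr_odd :: "('g, 'b) monoid_scheme \<Rightarrow> (rat \<Rightarrow> 'm::ab_group_add \<Rightarrow> 'm) \<Rightarrow> ('g \<Rightarrow> 'm \<Rightarrow> 'm) \<Rightarrow> 'g \<Rightarrow> bool" where
  "gr_odd G scl act \<iota> \<longleftrightarrow>
     (\<exists>(F :: nat \<Rightarrow> 'm set) k.
        (\<forall>i\<le>k. is_submodule G scl act (F i)) \<and>
        (\<forall>i<k. F i \<subseteq> F (Suc i)) \<and> F k = UNIV \<and>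
        (\<forall>m\<in>F 0. act \<iota> m = - m) \<and>
        (\<forall>i<k. \<forall>m\<in>F (Suc i). act \<iota> m + m \<in> F i))"

definition tuples :: "('g, 'b) monoid_scheme \<Rightarrow> nat \<Rightarrow> 'g list set" where
  "tuples G n = {\<sigma>. length \<sigma> = n \<and> set \<sigma> \<subseteq> carrier G}"

text \<open>merge G i [g1,...,gn] = [g1,...,g_i g_(i+1),...,gn]  (1 \<le> i < n)\<close>
definition merge :: "('g, 'b) monoid_scheme \<Rightarrow> nat \<Rightarrow> 'g list \<Rightarrow> 'g list" where
  "merge G i \<sigma> = take (i - 1) \<sigma> @ [\<sigma> ! (i - 1) \<otimes>\<^bsub>G\<^esub> \<sigma> ! i] @ drop (i + 1) \<sigma>"

definition alt_sign :: "nat \<Rightarrow> 'm::ab_group_add \<Rightarrow> 'm" where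
  "alt_sign i x = (if even i then x else - x)"

text \<open>Chains C_n(G;M) = M \<otimes> Z[G^n]: finitely supported functions G^n \<rightarrow> M.\<close>
definition chains :: "('g, 'b) monoid_scheme \<Rightarrow> nat \<Rightarrow> ('g list \<Rightarrow> 'm::ab_group_add) set" where
  "chains G n = {c. finite {\<sigma>. c \<sigma> \<noteq> 0} \<and> (\<forall>\<sigma>. c \<sigma> \<noteq> 0 \<longrightarrow> \<sigma> \<in> tuples G n)}"

text \<open>d([g1|...|gn] \<otimes> m) = [g2|...|gn] \<otimes> g1^(-1) m
   + \<Sum>_(i=1..n-1) (-1)^i [..|g_i g_(i+1)|..] \<otimes> m + (-1)^n [g1|...|g_(n-1)] \<otimes> m,
  extended additively; d_0 = 0.\<close>
definition chain_bd :: "('g, 'b) monoid_scheme \<Rightarrow> ('g \<Rightarrow> 'm \<Rightarrow> 'm) \<Rightarrow> nat \<Rightarrow> ('g list \<Rightarrow> 'm::ab_group_add) \<Rightarrow> 'g list \<Rightarrow> 'm" where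
  "chain_bd G act n c \<tau> =
     (if n = 0 then 0 else
      (\<Sum>\<sigma>\<in>{\<sigma>. c \<sigma> \<noteq> 0}.
          (if tl \<sigma> = \<tau> then act (inv\<^bsub>G\<^esub> (hd \<sigma>)) (c \<sigma>) else 0)
        + (\<Sum>i\<in>{1..<n}. if merge G i \<sigma> = \<tau> then alt_sign i (c \<sigma>) else 0)
        + (if butlast \<sigma> = \<tau> then alt_sign n (c \<sigma>) else 0)))"

definition group_homology_vanishes :: "('g, 'b) monoid_scheme \<Rightarrow> ('g \<Rightarrow> 'm \<Rightarrow> 'm) \<Rightarrow> nat \<Rightarrow> 'm::ab_group_add itself \<Rightarrow> bool" where
  "group_homology_vanishes G act i _ \<longleftrightarrow>
     (\<forall>c\<in>(chains G i :: ('g list \<Rightarrow> 'm) set). chain_bd G act i c = (\<lambda>_. 0) \<longrightarrow>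
        (\<exists>b\<in>chains G (Suc i). chain_bd G act (Suc i) b = c))"

definition cochains :: "('g, 'b) monoid_scheme \<Rightarrow> nat \<Rightarrow> ('g list \<Rightarrow> 'm::ab_group_add) set" where
  "cochains G n = {f. \<forall>\<sigma>. \<sigma> \<notin> tuples G n \<longrightarrow> f \<sigma> = 0}"

definition cochain_cobd :: "('g, 'b) monoid_scheme \<Rightarrow> ('g \<Rightarrow> 'm \<Rightarrow> 'm) \<Rightarrow> nat \<Rightarrow> ('g list \<Rightarrow> 'm::ab_group_add) \<Rightarrow> 'g list \<Rightarrow> 'm" where
  "cochain_cobd G act n f \<tau> =
     (if \<tau> \<in> tuples G (Suc n) then
        act (hd \<tau>) (f (tl \<tau>))
        + (\<Sum>i\<in>{1..n}. alt_sign i (f (merge G i \<tau>)))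
        + alt_sign (Suc n) (f (butlast \<tau>))
      else 0)"

definition group_cohomology_vanishes :: "('g, 'b) monoid_scheme \<Rightarrow> ('g \<Rightarrow> 'm \<Rightarrow> 'm) \<Rightarrow> nat \<Rightarrow> 'm::ab_group_add itself \<Rightarrow> bool" where
  "group_cohomology_vanishes G act i _ \<longleftrightarrow>
     (\<forall>f\<in>(cochains G i :: ('g list \<Rightarrow> 'm) set). cochain_cobd G act i f = (\<lambda>_. 0) \<longrightarrow>
        (case i of 0 \<Rightarrow> f = (\<lambda>_. 0)
         | Suc j \<Rightarrow> (\<exists>h\<in>cochains G j. cochain_cobd G act j h = f)))"

definition central_mod :: "('g, 'b) monoid_scheme \<Rightarrow> 'g set \<Rightarrow> 'g \<Rightarrow> bool" where
  "central_mod G L \<iota> \<longleftrightarrow>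
     (\<forall>Y\<in>carrier (G Mod L). (r_coset G L \<iota>) <#>\<^bsub>G\<^esub> Y = Y <#>\<^bsub>G\<^esub> (r_coset G L \<iota>))"

end

theory Submission
  imports Defs
begin

definition ins :: "nat \<Rightarrow> 'a \<Rightarrow> 'a list \<Rightarrow> 'a list" where
  "ins i x s = take i s @ x # drop i s"

lemma length_ins[simp]: "i \<le> length s \<Longrightarrow> length (ins i x s) = Suc (length s)"
  by (simp add: ins_def)

lemma set_ins: "i \<le> length s \<Longrightarrow> set (ins i x s) = insert x (set s)"
  unfolding ins_def
  by (metis Un_insert_right append_take_drop_id list.set(2) set_append)

lemma hd_ins0[simp]: "hd (ins 0 x s) = x" and tl_ins0[simp]: "tl (ins 0 x s) = s"
  by (simp_all add: ins_def)

lemma hd_ins: "1 \<le> i \<Longrightarrow> s \<noteq> [] \<Longrightarrow> hd (ins i x s) = hd s"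
  by (cases s; cases i) (auto simp: ins_def)

lemma tl_ins: "1 \<le> i \<Longrightarrow> s \<noteq> [] \<Longrightarrow> tl (ins i x s) = ins (i - 1) x (tl s)"
  by (cases s; cases i) (auto simp: ins_def)

lemma butlast_ins_last: "length s = n \<Longrightarrow> butlast (ins n x s) = s"
  by (simp add: ins_def)

lemma butlast_ins: "i < length s \<Longrightarrow> butlast (ins i x s) = ins i x (butlast s)"
  by (simp add: ins_def butlast_append take_butlast drop_butlast)

lemma ins_append: "ins (length A + k) x (A @ B) = A @ ins k x B"
  by (simp add: ins_def)

lemma ins_append2: "k \<le> length A \<Longrightarrow> ins k x (A @ B) = ins k x A @ B"
  by (simp add: ins_def)

lemma merge_decomp: "length A = j - 1 \<Longrightarrow> 1 \<le> j \<Longrightarrow> merge G j (A @ [a,b] @ D) = A @ [a \<otimes>\<^bsub>G\<^esub> b] @ D"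
  by (cases j) (auto simp: merge_def nth_append)

lemma decomp: "1 \<le> j \<Longrightarrow> j < length s \<Longrightarrow> s = take (j-1) s @ [s!(j-1), s!j] @ drop (j+1) s"
  by (metis Cons_nth_drop_Suc One_nat_def Suc_lessD Suc_pred append.assoc append_Cons
      append_take_drop_id le_less_Suc_eq less_Suc_eq_0_disj not_less_eq_eq self_append_conv2
      add.commute plus_1_eq_Suc)

lemma ins_SS: "ins (Suc (Suc k)) x (a # b # D) = a # b # ins k x D"
  by (simp add: ins_def)

lemma merge_ins_lt:
  assumes "1 \<le> j" "j < i" "i \<le> length s"
  shows "merge G j (ins i x s) = ins (i - 1) x (merge G j s)"
proof -
  let ?A = "take (j-1) s" and ?a = "s!(j-1)" and ?b = "s!j" and ?D = "drop (j+1) s"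
  have s: "s = ?A @ [?a,?b] @ ?D" using decomp[of j s] assms by simp
  have lA: "length ?A = j - 1" using assms by simp
  have i: "i = length ?A + Suc (Suc (i - j - 1))" using lA assms by simp
  have "ins i x s = ?A @ [?a,?b] @ ins (i - j - 1) x ?D"
    by (subst s, subst i, subst ins_append) (simp add: ins_SS)
  hence "merge G j (ins i x s) = ?A @ [?a \<otimes>\<^bsub>G\<^esub> ?b] @ ins (i - j - 1) x ?D"
    using merge_decomp[OF lA assms(1)] by simp
  also have "\<dots> = ins (i - 1) x (?A @ [?a \<otimes>\<^bsub>G\<^esub> ?b] @ ?D)"
  proof -
    have i2: "i - 1 = length ?A + Suc (i - j - 1)" using lA assms by simp
    show ?thesis by (subst i2, subst ins_append) (simp add: ins_def)
  qed
  also have "?A @ [?a \<otimes>\<^bsub>G\<^esub> ?b] @ ?D = merge G j s"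
    by (subst (2) s, rule merge_decomp[OF lA assms(1), symmetric])
  finally show ?thesis .
qed

lemma merge_ins_gt:
  assumes "i + 2 \<le> j" "j \<le> length s"
  shows "merge G j (ins i x s) = ins i x (merge G (j - 1) s)"
proof -
  let ?A = "take (j-2) s" and ?a = "s!(j-2)" and ?b = "s!(j-1)" and ?D = "drop j s"
  have s: "s = ?A @ [?a,?b] @ ?D" using decomp[of "j-1" s] assms
    by (simp add: numeral_2_eq_2)
  have lA: "length ?A = j - 2" using assms by simp
  have "ins i x s = ins i x ?A @ [?a,?b] @ ?D"
    by (subst s, rule ins_append2) (use lA assms in simp)
  moreover have "length (ins i x ?A) = j - 1" using lA assms by simp
  ultimately have "merge G j (ins i x s) = ins i x ?A @ [?a \<otimes>\<^bsub>G\<^esub> ?b] @ ?D"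
    using merge_decomp[of "ins i x ?A" j] assms by simp
  also have "\<dots> = ins i x (?A @ [?a \<otimes>\<^bsub>G\<^esub> ?b] @ ?D)"
    by (rule ins_append2[symmetric]) (use lA assms in simp)
  also have "?A @ [?a \<otimes>\<^bsub>G\<^esub> ?b] @ ?D = merge G (j - 1) s"
    by (subst (2) s, rule merge_decomp[symmetric]) (use lA assms in auto)
  finally show ?thesis .
qed

lemma merge_ins_eq:
  assumes "1 \<le> i" "i \<le> length s"
  shows "merge G i (ins i x s) = take (i-1) s @ [s!(i-1) \<otimes>\<^bsub>G\<^esub> x] @ drop i s"
proof -
  have "ins i x s = take (i-1) s @ [s!(i-1), x] @ drop i s"
  proof -
    have "take i s = take (i-1) s @ [s!(i-1)]"
      using assms by (metis One_nat_def Suc_pred' le_less_Suc_eq less_eq_Suc_le take_Suc_conv_app_nth zero_less_iff_neq_zero not_less_eq_eq le_zero_eq)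
    thus ?thesis by (simp add: ins_def)
  qed
  thus ?thesis using merge_decomp[of "take (i-1) s" i] assms by simp
qed

lemma merge_ins_eq2:
  assumes "i < length s"
  shows "merge G (Suc i) (ins i x s) = take i s @ [x \<otimes>\<^bsub>G\<^esub> s!i] @ drop (Suc i) s"
proof -
  have "ins i x s = take i s @ [x, s!i] @ drop (Suc i) s"
    using assms unfolding ins_def by (simp add: Cons_nth_drop_Suc)
  thus ?thesis using merge_decomp[of "take i s" "Suc i"] assms by simp
qed


lemma alt_sign_0[simp]: "alt_sign 0 y = y" by (simp add: alt_sign_def)
lemma alt_sign_Suc: "alt_sign (Suc i) y = - alt_sign i y" by (simp add: alt_sign_def)
lemma alt_sign_minus: "alt_sign i (- y) = - alt_sign i y" by (simp add: alt_sign_def)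
lemma alt_sign_add: "alt_sign i (y + z) = alt_sign i y + alt_sign i z" by (simp add: alt_sign_def)
lemma alt_sign_diff: "alt_sign i (y - z) = alt_sign i y - alt_sign i z" by (simp add: alt_sign_def)
lemma alt_sign_zero[simp]: "alt_sign i 0 = 0" by (simp add: alt_sign_def)
lemma alt_sign_sum: "alt_sign i (sum f A) = (\<Sum>a\<in>A. alt_sign i (f a))"
  by (simp add: alt_sign_def sum_negf)
lemma alt_alt: "alt_sign i (alt_sign j y) = alt_sign (i + j) y" by (simp add: alt_sign_def)
lemma alt_self[simp]: "alt_sign i (alt_sign i y) = y" by (simp add: alt_sign_def)
lemma alt_comm: "alt_sign i (alt_sign j y) = alt_sign j (alt_sign i y)" by (simp add: alt_sign_def)
lemma alt_SS: "alt_sign (Suc (Suc i)) y = alt_sign i y" by (simp add: alt_sign_def)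

lemma split4:
  fixes g :: "nat \<Rightarrow> 'a::comm_monoid_add"
  assumes "i \<le> n"
  shows "sum g {1..n} = sum g {1..<i} + (if 1 \<le> i then g i else 0) + (if i < n then g (Suc i) else 0) + sum g {Suc (Suc i)..n}"
proof (cases "i = 0")
  case True
  then show ?thesis
    by (cases n) (auto simp: sum.atLeast_Suc_atMost add.assoc)
next
  case False
  have "sum g {1..n} = sum g {1..<i} + sum g {i..<Suc n}"
  proof -
    have "sum g {1..<i} + sum g {i..<Suc n} = sum g {1..<Suc n}"
      using False assms by (intro sum.atLeastLessThan_concat) auto
    thus ?thesis by (simp add: atLeastLessThanSuc_atLeastAtMost)
  qed
  also have "sum g {i..<Suc n} = g i + sum g {Suc i..n}"
    using assms by (simp add: atLeastLessThanSuc_atLeastAtMost sum.atLeast_Suc_atMost)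
  also have "sum g {Suc i..n} = (if i < n then g (Suc i) else 0) + sum g {Suc (Suc i)..n}"
    by (auto simp: sum.atLeast_Suc_atMost)
  finally show ?thesis using False by (simp add: add.assoc)
qed


context group
begin

lemma conj_bij:
  assumes "g \<in> carrier G" "Cl \<subseteq> carrier G" "\<forall>h\<in>carrier G. \<forall>x\<in>Cl. h \<otimes> x \<otimes> inv h \<in> Cl"
  shows "bij_betw (\<lambda>x. g \<otimes> x \<otimes> inv g) Cl Cl"
proof (rule bij_betw_imageI)
  show "inj_on (\<lambda>x. g \<otimes> x \<otimes> inv g) Cl"
  proof (rule inj_onI)
    fix x y assume xy: "x \<in> Cl" "y \<in> Cl" "g \<otimes> x \<otimes> inv g = g \<otimes> y \<otimes> inv g"
    hence "g \<otimes> x = g \<otimes> y" using assms by (meson subsetD m_closed inv_closed r_cancel)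
    thus "x = y" using assms xy by (meson subsetD l_cancel)
  qed
  show "(\<lambda>x. g \<otimes> x \<otimes> inv g) ` Cl = Cl"
  proof
    show "(\<lambda>x. g \<otimes> x \<otimes> inv g) ` Cl \<subseteq> Cl" using assms by auto
    show "Cl \<subseteq> (\<lambda>x. g \<otimes> x \<otimes> inv g) ` Cl"
    proof
      fix y assume y: "y \<in> Cl"
      hence yc: "y \<in> carrier G" using assms by auto
      have "inv g \<otimes> y \<otimes> inv (inv g) \<in> Cl" using bspec[OF assms(3) inv_closed[OF assms(1)]] y by blast
      moreover have "y = g \<otimes> (inv g \<otimes> y \<otimes> inv (inv g)) \<otimes> inv g"
        using assms(1) yc by (simp add: m_assoc) (simp add: m_assoc[symmetric])
      ultimately show "y \<in> (\<lambda>x. g \<otimes> x \<otimes> inv g) ` Cl" by blast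
    qed
  qed
qed

lemma LR:
  assumes "Cl \<subseteq> carrier G" "\<forall>h\<in>carrier G. \<forall>x\<in>Cl. h \<otimes> x \<otimes> inv h \<in> Cl" "g \<in> carrier G"
  shows "(\<Sum>x\<in>Cl. F (g \<otimes> x)) = (\<Sum>x\<in>Cl. F (x \<otimes> g))"
proof -
  have "(\<Sum>x\<in>Cl. F (x \<otimes> g)) = (\<Sum>x\<in>Cl. F ((g \<otimes> x \<otimes> inv g) \<otimes> g))"
    using sum.reindex_bij_betw[OF conj_bij[OF assms(3,1,2)], of "\<lambda>y. F (y \<otimes> g)"] by simp
  also have "\<dots> = (\<Sum>x\<in>Cl. F (g \<otimes> x))"
    using assms by (intro sum.cong) (auto simp: m_assoc subsetD)
  finally show ?thesis by simp
qed

lemma gen_T0: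
  assumes "length s = Suc p"
  shows "(\<Sum>i\<in>{0..Suc p}. alt_sign i (\<Phi>0 (hd (ins i x s)) (tl (ins i x s))))
     = \<Phi>0 x s - (\<Sum>i\<in>{0..p}. alt_sign i (\<Phi>0 (hd s) (ins i x (tl s))))"
proof -
  have ne: "s \<noteq> []" using assms by auto
  show ?thesis
    by (subst sum.atLeast0_atMost_Suc_shift) (simp add: hd_ins[OF _ ne] tl_ins[OF _ ne] alt_sign_Suc sum_negf)
qed

lemma gen_B:
  assumes "length s = Suc p"
  shows "(\<Sum>i\<in>{0..Suc p}. alt_sign i (alt_sign (Suc (Suc p)) (\<Phi>1 (butlast (ins i x s)))))
     = - alt_sign (Suc p) (\<Sum>i\<in>{0..p}. alt_sign i (\<Phi>1 (ins i x (butlast s)))) - \<Phi>1 s"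
proof -
  have "(\<Sum>i\<in>{0..p}. alt_sign i (alt_sign (Suc (Suc p)) (\<Phi>1 (butlast (ins i x s)))))
      = (\<Sum>i\<in>{0..p}. - alt_sign (Suc p) (alt_sign i (\<Phi>1 (ins i x (butlast s)))))"
    using assms by (intro sum.cong) (auto simp: butlast_ins alt_SS alt_sign_Suc alt_sign_minus alt_alt add.commute)
  moreover have "alt_sign (Suc p) (alt_sign (Suc (Suc p)) (\<Phi>1 (butlast (ins (Suc p) x s)))) = - \<Phi>1 s"
    using assms by (simp add: butlast_ins_last alt_SS alt_sign_Suc)
  ultimately show ?thesis
    by (simp add: sum.atLeast0_atMost_Suc alt_sign_sum sum_negf)
qed

lemma gen_M:
  assumes "length s = Suc p"
  shows "(\<Sum>i\<in>{0..Suc p}. alt_sign i (\<Sum>j\<in>{1..Suc p}. alt_sign j (\<Phi>1 (merge G j (ins i x s)))))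
     = - (\<Sum>i\<in>{0..p}. alt_sign i (\<Sum>j\<in>{1..p}. alt_sign j (\<Phi>1 (ins i x (merge G j s)))))
       + (\<Sum>i\<in>{0..p}. \<Phi>1 (take i s @ [s!i \<otimes> x] @ drop (Suc i) s))
       - (\<Sum>i\<in>{0..p}. \<Phi>1 (take i s @ [x \<otimes> s!i] @ drop (Suc i) s))"
proof -
  define A where "A i = (\<Sum>j\<in>{1..<i}. alt_sign j (\<Phi>1 (ins (i-1) x (merge G j s))))" for i
  define Lt where "Lt i = (if 1 \<le> i then alt_sign i (\<Phi>1 (take (i-1) s @ [s!(i-1) \<otimes> x] @ drop i s)) else 0)" for i
  define Rt where "Rt i = (if i < Suc p then alt_sign (Suc i) (\<Phi>1 (take i s @ [x \<otimes> s!i] @ drop (Suc i) s)) else 0)" for i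
  define D where "D i = (\<Sum>j\<in>{Suc (Suc i)..Suc p}. alt_sign j (\<Phi>1 (ins i x (merge G (j - 1) s))))" for i
  have split: "(\<Sum>j\<in>{1..Suc p}. alt_sign j (\<Phi>1 (merge G j (ins i x s)))) = A i + Lt i + Rt i + D i"
    if i: "i \<in> {0..Suc p}" for i
  proof -
    have ile: "i \<le> Suc p" using i by simp
    have a: "(\<Sum>j\<in>{1..<i}. alt_sign j (\<Phi>1 (merge G j (ins i x s)))) = A i"
      unfolding A_def using ile assms by (intro sum.cong) (auto simp: merge_ins_lt)
    have d: "(\<Sum>j\<in>{Suc (Suc i)..Suc p}. alt_sign j (\<Phi>1 (merge G j (ins i x s)))) = D i"
      unfolding D_def using ile assms by (intro sum.cong) (auto simp: merge_ins_gt)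
    have l: "(if 1 \<le> i then alt_sign i (\<Phi>1 (merge G i (ins i x s))) else 0) = Lt i"
      unfolding Lt_def using ile assms by (auto simp: merge_ins_eq)
    have r: "(if i < Suc p then alt_sign (Suc i) (\<Phi>1 (merge G (Suc i) (ins i x s))) else 0) = Rt i"
      unfolding Rt_def using ile assms by (auto simp: merge_ins_eq2)
    show ?thesis
      using split4[OF ile, of "\<lambda>j. alt_sign j (\<Phi>1 (merge G j (ins i x s)))"] a d l r by simp
  qed
  have "(\<Sum>i\<in>{0..Suc p}. alt_sign i (\<Sum>j\<in>{1..Suc p}. alt_sign j (\<Phi>1 (merge G j (ins i x s)))))
      = (\<Sum>i\<in>{0..Suc p}. alt_sign i (A i) + alt_sign i (Lt i) + alt_sign i (Rt i) + alt_sign i (D i))"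
    by (rule sum.cong[OF refl], subst split, assumption, simp add: alt_sign_add)
  also have "\<dots> = (\<Sum>i\<in>{0..Suc p}. alt_sign i (A i)) + (\<Sum>i\<in>{0..Suc p}. alt_sign i (Lt i))
      + (\<Sum>i\<in>{0..Suc p}. alt_sign i (Rt i)) + (\<Sum>i\<in>{0..Suc p}. alt_sign i (D i))"
    by (simp add: sum.distrib)
  also have "(\<Sum>i\<in>{0..Suc p}. alt_sign i (Lt i)) = (\<Sum>i\<in>{0..p}. \<Phi>1 (take i s @ [s!i \<otimes> x] @ drop (Suc i) s))"
    by (subst sum.atLeast0_atMost_Suc_shift) (simp add: Lt_def alt_sign_Suc alt_sign_minus)
  also have "(\<Sum>i\<in>{0..Suc p}. alt_sign i (Rt i)) = - (\<Sum>i\<in>{0..p}. \<Phi>1 (take i s @ [x \<otimes> s!i] @ drop (Suc i) s))"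
  proof -
    have "(\<Sum>i\<in>{0..p}. alt_sign i (Rt i)) = (\<Sum>i\<in>{0..p}. - \<Phi>1 (take i s @ [x \<otimes> s!i] @ drop (Suc i) s))"
      by (intro sum.cong) (auto simp: Rt_def alt_sign_Suc alt_sign_minus)
    thus ?thesis by (simp add: sum.atLeast0_atMost_Suc Rt_def sum_negf)
  qed
  finally have main: "(\<Sum>i\<in>{0..Suc p}. alt_sign i (\<Sum>j\<in>{1..Suc p}. alt_sign j (\<Phi>1 (merge G j (ins i x s)))))
     = (\<Sum>i\<in>{0..Suc p}. alt_sign i (A i)) + (\<Sum>i\<in>{0..p}. \<Phi>1 (take i s @ [s!i \<otimes> x] @ drop (Suc i) s))
       + - (\<Sum>i\<in>{0..p}. \<Phi>1 (take i s @ [x \<otimes> s!i] @ drop (Suc i) s)) + (\<Sum>i\<in>{0..Suc p}. alt_sign i (D i))" .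
  have AD: "(\<Sum>i\<in>{0..Suc p}. alt_sign i (A i)) + (\<Sum>i\<in>{0..Suc p}. alt_sign i (D i))
     = - (\<Sum>i\<in>{0..p}. alt_sign i (\<Sum>j\<in>{1..p}. alt_sign j (\<Phi>1 (ins i x (merge G j s)))))"
  proof -
    have sA: "(\<Sum>i\<in>{0..Suc p}. alt_sign i (A i)) = - (\<Sum>i\<in>{0..p}. alt_sign i (\<Sum>j\<in>{1..<Suc i}. alt_sign j (\<Phi>1 (ins i x (merge G j s)))))"
      by (subst sum.atLeast0_atMost_Suc_shift) (simp add: A_def alt_sign_Suc sum_negf)
    have "D (Suc p) = 0" unfolding D_def by simp
    hence sD0: "(\<Sum>i\<in>{0..Suc p}. alt_sign i (D i)) = (\<Sum>i\<in>{0..p}. alt_sign i (D i))"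
      by (simp add: sum.atLeast0_atMost_Suc)
    have Di: "D i = - (\<Sum>j\<in>{Suc i..<Suc p}. alt_sign j (\<Phi>1 (ins i x (merge G j s))))" for i
      unfolding D_def
      by (simp only: sum.shift_bounds_cl_Suc_ivl atLeastLessThanSuc_atLeastAtMost)
         (simp add: alt_sign_Suc sum_negf)
    have cat: "(\<Sum>j\<in>{1..<Suc i}. f j) + (\<Sum>j\<in>{Suc i..<Suc p}. f j) = (\<Sum>j\<in>{1..p}. f j)"
      if "i \<in> {0..p}" for i and f :: "nat \<Rightarrow> 'z::ab_group_add"
      using that by (subst sum.atLeastLessThan_concat) (auto simp: atLeastLessThanSuc_atLeastAtMost)
    have "(\<Sum>i\<in>{0..p}. alt_sign i (\<Sum>j\<in>{1..<Suc i}. alt_sign j (\<Phi>1 (ins i x (merge G j s))))) - (\<Sum>i\<in>{0..p}. alt_sign i (D i))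
      = (\<Sum>i\<in>{0..p}. alt_sign i ((\<Sum>j\<in>{1..<Suc i}. alt_sign j (\<Phi>1 (ins i x (merge G j s)))) + (\<Sum>j\<in>{Suc i..<Suc p}. alt_sign j (\<Phi>1 (ins i x (merge G j s))))))"
      by (simp add: Di alt_sign_add alt_sign_minus sum.distrib sum_negf)
    also have "\<dots> = (\<Sum>i\<in>{0..p}. alt_sign i (\<Sum>j\<in>{1..p}. alt_sign j (\<Phi>1 (ins i x (merge G j s)))))"
      by (intro sum.cong refl) (simp only: cat)
    finally have fin: "(\<Sum>i\<in>{0..p}. alt_sign i (\<Sum>j\<in>{1..<Suc i}. alt_sign j (\<Phi>1 (ins i x (merge G j s))))) - (\<Sum>i\<in>{0..p}. alt_sign i (D i))
      = (\<Sum>i\<in>{0..p}. alt_sign i (\<Sum>j\<in>{1..p}. alt_sign j (\<Phi>1 (ins i x (merge G j s)))))" .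
    show ?thesis unfolding sA sD0 fin[symmetric] by simp
  qed
  show ?thesis unfolding main AD[symmetric] by (simp add: algebra_simps)
qed

lemma gen:
  assumes Cl: "Cl \<subseteq> carrier G" "\<forall>h\<in>carrier G. \<forall>x\<in>Cl. h \<otimes> x \<otimes> inv h \<in> Cl"
    and s: "length s = Suc p" "set s \<subseteq> carrier G"
  shows "(\<Sum>x\<in>Cl. \<Sum>i\<in>{0..Suc p}. alt_sign i (\<Phi>0 (hd (ins i x s)) (tl (ins i x s))
            + (\<Sum>j\<in>{1..Suc p}. alt_sign j (\<Phi>1 (merge G j (ins i x s))))
            + alt_sign (Suc (Suc p)) (\<Phi>1 (butlast (ins i x s)))))
   + ((\<Sum>x\<in>Cl. \<Sum>i\<in>{0..p}. alt_sign i (\<Phi>0 (hd s) (ins i x (tl s))))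
      + (\<Sum>j\<in>{1..p}. alt_sign j (\<Sum>x\<in>Cl. \<Sum>i\<in>{0..p}. alt_sign i (\<Phi>1 (ins i x (merge G j s)))))
      + alt_sign (Suc p) (\<Sum>x\<in>Cl. \<Sum>i\<in>{0..p}. alt_sign i (\<Phi>1 (ins i x (butlast s)))))
   = (\<Sum>x\<in>Cl. \<Phi>0 x s) - (\<Sum>x\<in>Cl. \<Phi>1 s)"
proof -
  define TL where "TL x = (\<Sum>i\<in>{0..p}. alt_sign i (\<Phi>0 (hd s) (ins i x (tl s))))" for x
  define AD where "AD x = (\<Sum>i\<in>{0..p}. alt_sign i (\<Sum>j\<in>{1..p}. alt_sign j (\<Phi>1 (ins i x (merge G j s)))))" for x
  define Lx where "Lx x = (\<Sum>i\<in>{0..p}. \<Phi>1 (take i s @ [s!i \<otimes> x] @ drop (Suc i) s))" for x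
  define Rx where "Rx x = (\<Sum>i\<in>{0..p}. \<Phi>1 (take i s @ [x \<otimes> s!i] @ drop (Suc i) s))" for x
  define BL where "BL x = (\<Sum>i\<in>{0..p}. alt_sign i (\<Phi>1 (ins i x (butlast s))))" for x
  have per: "(\<Sum>i\<in>{0..Suc p}. alt_sign i (\<Phi>0 (hd (ins i x s)) (tl (ins i x s))
            + (\<Sum>j\<in>{1..Suc p}. alt_sign j (\<Phi>1 (merge G j (ins i x s))))
            + alt_sign (Suc (Suc p)) (\<Phi>1 (butlast (ins i x s)))))
       = \<Phi>0 x s - TL x + (- AD x + Lx x - Rx x) + (- alt_sign (Suc p) (BL x) - \<Phi>1 s)" for x
  proof -
    have "(\<Sum>i\<in>{0..Suc p}. alt_sign i (\<Phi>0 (hd (ins i x s)) (tl (ins i x s))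
            + (\<Sum>j\<in>{1..Suc p}. alt_sign j (\<Phi>1 (merge G j (ins i x s))))
            + alt_sign (Suc (Suc p)) (\<Phi>1 (butlast (ins i x s)))))
       = (\<Sum>i\<in>{0..Suc p}. alt_sign i (\<Phi>0 (hd (ins i x s)) (tl (ins i x s))))
         + (\<Sum>i\<in>{0..Suc p}. alt_sign i (\<Sum>j\<in>{1..Suc p}. alt_sign j (\<Phi>1 (merge G j (ins i x s)))))
         + (\<Sum>i\<in>{0..Suc p}. alt_sign i (alt_sign (Suc (Suc p)) (\<Phi>1 (butlast (ins i x s)))))"
      by (simp only: alt_sign_add sum.distrib)
    also have "\<dots> = \<Phi>0 x s - TL x + (- AD x + Lx x - Rx x) + (- alt_sign (Suc p) (BL x) - \<Phi>1 s)"
      unfolding gen_T0[OF s(1)] gen_M[OF s(1)] gen_B[OF s(1)] TL_def AD_def Lx_def Rx_def BL_def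
      by simp
    finally show ?thesis .
  qed
  have LR': "(\<Sum>x\<in>Cl. Lx x) = (\<Sum>x\<in>Cl. Rx x)"
  proof -
    have "(\<Sum>x\<in>Cl. Lx x) = (\<Sum>i\<in>{0..p}. \<Sum>x\<in>Cl. \<Phi>1 (take i s @ [s!i \<otimes> x] @ drop (Suc i) s))"
      unfolding Lx_def by (rule sum.swap)
    also have "\<dots> = (\<Sum>i\<in>{0..p}. \<Sum>x\<in>Cl. \<Phi>1 (take i s @ [x \<otimes> s!i] @ drop (Suc i) s))"
    proof (rule sum.cong[OF refl])
      fix i assume "i \<in> {0..p}"
      hence "s!i \<in> carrier G" using s by (auto simp: subset_iff)
      thus "(\<Sum>x\<in>Cl. \<Phi>1 (take i s @ [s!i \<otimes> x] @ drop (Suc i) s)) = (\<Sum>x\<in>Cl. \<Phi>1 (take i s @ [x \<otimes> s!i] @ drop (Suc i) s))"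
        using LR[OF Cl, of "s!i" "\<lambda>y. \<Phi>1 (take i s @ [y] @ drop (Suc i) s)"] by simp
    qed
    also have "\<dots> = (\<Sum>x\<in>Cl. Rx x)"
      unfolding Rx_def by (rule sum.swap)
    finally show ?thesis .
  qed
  have AD': "(\<Sum>j\<in>{1..p}. alt_sign j (\<Sum>x\<in>Cl. \<Sum>i\<in>{0..p}. alt_sign i (\<Phi>1 (ins i x (merge G j s)))))
      = (\<Sum>x\<in>Cl. AD x)"
  proof -
    have "(\<Sum>x\<in>Cl. AD x) = (\<Sum>x\<in>Cl. \<Sum>i\<in>{0..p}. \<Sum>j\<in>{1..p}. alt_sign j (alt_sign i (\<Phi>1 (ins i x (merge G j s)))))"
      unfolding AD_def alt_sign_sum by (simp add: alt_alt add.commute)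
    also have "\<dots> = (\<Sum>x\<in>Cl. \<Sum>j\<in>{1..p}. \<Sum>i\<in>{0..p}. alt_sign j (alt_sign i (\<Phi>1 (ins i x (merge G j s)))))"
      by (rule sum.cong[OF refl], rule sum.swap)
    also have "\<dots> = (\<Sum>j\<in>{1..p}. \<Sum>x\<in>Cl. \<Sum>i\<in>{0..p}. alt_sign j (alt_sign i (\<Phi>1 (ins i x (merge G j s)))))"
      by (rule sum.swap)
    finally show ?thesis unfolding alt_sign_sum by simp
  qed
  show ?thesis
    unfolding per AD' TL_def[symmetric] BL_def[symmetric]
    by (simp add: sum.distrib sum_subtractf sum_negf alt_sign_sum[symmetric] LR')
qed

lemma gen0:
  shows "(\<Sum>x\<in>Cl. \<Sum>i\<in>{0..0}. alt_sign i (\<Phi>0 (hd (ins i x [])) (tl (ins i x []))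
            + (\<Sum>j\<in>{1..0}. alt_sign j (\<Phi>1 (merge G j (ins i x []))))
            + alt_sign (Suc 0) (\<Phi>1 (butlast (ins i x [])))))
   = (\<Sum>x\<in>Cl. \<Phi>0 x []) - (\<Sum>x\<in>Cl. \<Phi>1 [])"
  by (simp add: ins_def alt_sign_def sum_subtractf)

lemma tuples_tl: "s \<in> tuples G (Suc p) \<Longrightarrow> tl s \<in> tuples G p"
  by (cases s) (auto simp: tuples_def)
lemma tuples_hd: "s \<in> tuples G (Suc p) \<Longrightarrow> hd s \<in> carrier G"
  by (cases s) (auto simp: tuples_def)
lemma tuples_butlast: "s \<in> tuples G (Suc p) \<Longrightarrow> butlast s \<in> tuples G p"
  by (auto simp: tuples_def dest: in_set_butlastD)
lemma tuples_ins: "s \<in> tuples G p \<Longrightarrow> x \<in> carrier G \<Longrightarrow> i \<le> p \<Longrightarrow> ins i x s \<in> tuples G (Suc p)"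
  by (auto simp: tuples_def set_ins)
lemma tuples_merge:
  assumes "s \<in> tuples G (Suc p)" "1 \<le> j" "j \<le> p"
  shows "merge G j s \<in> tuples G p"
proof -
  have l: "length s = Suc p" and c: "set s \<subseteq> carrier G" using assms by (auto simp: tuples_def)
  have "s ! (j-1) \<in> carrier G" "s ! j \<in> carrier G" using l c assms by (auto simp: subset_iff)
  moreover have "set (take (j-1) s) \<subseteq> carrier G" "set (drop (j+1) s) \<subseteq> carrier G"
    using c by (auto dest: in_set_takeD in_set_dropD)
  ultimately show ?thesis using l assms by (auto simp: tuples_def merge_def)
qed
lemma tuples_length: "s \<in> tuples G p \<Longrightarrow> length s = p" by (simp add: tuples_def)
lemma tuples_set: "s \<in> tuples G p \<Longrightarrow> set s \<subseteq> carrier G" by (simp add: tuples_def)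

end


locale rep_setting = group G for G :: "('g, 'b) monoid_scheme" (structure) +
  fixes scl :: "rat \<Rightarrow> 'm::ab_group_add \<Rightarrow> 'm" and act :: "'g \<Rightarrow> 'm \<Rightarrow> 'm"
  assumes rep: "rat_rep G scl act"
begin

lemma module_scl: "Modules.module scl" using rep by (simp add: rat_rep_def)
lemma act_add: "g \<in> carrier G \<Longrightarrow> act g (x + y) = act g x + act g y"
  using rep by (simp add: rat_rep_def)
lemma act_scl: "g \<in> carrier G \<Longrightarrow> act g (scl q x) = scl q (act g x)"
  using rep by (simp add: rat_rep_def)
lemma act_one[simp]: "act \<one> x = x"
  using rep by (simp add: rat_rep_def)
lemma act_mult: "g \<in> carrier G \<Longrightarrow> h \<in> carrier G \<Longrightarrow> act (g \<otimes> h) x = act g (act h x)"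
  using rep by (simp add: rat_rep_def)
lemma act_additive: "g \<in> carrier G \<Longrightarrow> additive (act g)"
  by (unfold_locales) (rule act_add)
lemma act_zero: "g \<in> carrier G \<Longrightarrow> act g 0 = 0"
  using additive.zero[OF act_additive] .
lemma act_minus: "g \<in> carrier G \<Longrightarrow> act g (- x) = - act g x"
  using additive.minus[OF act_additive] .
lemma act_diff: "g \<in> carrier G \<Longrightarrow> act g (x - y) = act g x - act g y"
  using additive.diff[OF act_additive] .
lemma act_sum: "g \<in> carrier G \<Longrightarrow> act g (sum f A) = (\<Sum>a\<in>A. act g (f a))"
  using additive.sum[OF act_additive] .
lemma act_alt: "g \<in> carrier G \<Longrightarrow> act g (alt_sign i x) = alt_sign i (act g x)"
  by (simp add: alt_sign_def act_minus)

definition Hc :: "'g set \<Rightarrow> nat \<Rightarrow> ('g list \<Rightarrow> 'm) \<Rightarrow> 'g list \<Rightarrow> 'm" where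
  "Hc Cl p f s = (if s \<in> tuples G p then \<Sum>x\<in>Cl. \<Sum>i\<in>{0..p}. alt_sign i (f (ins i x s)) else 0)"

lemma coh:
  assumes Cl: "Cl \<subseteq> carrier G" "\<forall>h\<in>carrier G. \<forall>x\<in>Cl. h \<otimes> x \<otimes> inv h \<in> Cl"
    and s: "s \<in> tuples G (Suc p)"
  shows "cochain_cobd G act p (Hc Cl p f) s + Hc Cl (Suc p) (cochain_cobd G act (Suc p) f) s
      = (\<Sum>x\<in>Cl. act x (f s)) - (\<Sum>x\<in>Cl. f s)"
proof -
  have hs: "hd s \<in> carrier G" using tuples_hd[OF s] .
  have A: "cochain_cobd G act p (Hc Cl p f) s =
      (\<Sum>x\<in>Cl. \<Sum>i\<in>{0..p}. alt_sign i (act (hd s) (f (ins i x (tl s)))))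
      + (\<Sum>j\<in>{1..p}. alt_sign j (\<Sum>x\<in>Cl. \<Sum>i\<in>{0..p}. alt_sign i (f (ins i x (merge G j s)))))
      + alt_sign (Suc p) (\<Sum>x\<in>Cl. \<Sum>i\<in>{0..p}. alt_sign i (f (ins i x (butlast s))))"
  proof -
    show ?thesis
      using s unfolding cochain_cobd_def
      by (simp add: tuples_merge[OF s] Hc_def tuples_tl tuples_butlast act_sum[OF hs] act_alt[OF hs])
  qed
  have B: "Hc Cl (Suc p) (cochain_cobd G act (Suc p) f) s =
     (\<Sum>x\<in>Cl. \<Sum>i\<in>{0..Suc p}. alt_sign i (act (hd (ins i x s)) (f (tl (ins i x s)))
            + (\<Sum>j\<in>{1..Suc p}. alt_sign j (f (merge G j (ins i x s))))
            + alt_sign (Suc (Suc p)) (f (butlast (ins i x s)))))"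
    using s Cl unfolding Hc_def
    by (auto intro!: sum.cong simp: cochain_cobd_def tuples_ins subsetD)
  show ?thesis
    unfolding A B
    using gen[OF Cl tuples_length[OF s] tuples_set[OF s], of "\<lambda>g r. act g (f r)" f]
    by (simp add: add.commute)
qed

lemma coh0:
  assumes "Cl \<subseteq> carrier G"
  shows "Hc Cl 0 (cochain_cobd G act 0 f) [] = (\<Sum>x\<in>Cl. act x (f [])) - (\<Sum>x\<in>Cl. f [])"
  using assms unfolding Hc_def
  by (auto intro!: sum.cong simp: cochain_cobd_def tuples_def ins_def alt_sign_def sum_subtractf subset_iff)

definition pushk :: "('g list \<Rightarrow> 'm \<Rightarrow> 'g list \<Rightarrow> 'm) \<Rightarrow> ('g list \<Rightarrow> 'm) \<Rightarrow> 'g list \<Rightarrow> 'm" where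
  "pushk K c t = (\<Sum>\<sigma>\<in>{\<sigma>. c \<sigma> \<noteq> 0}. K \<sigma> (c \<sigma>) t)"

lemma pushk_lin:
  assumes A: "finite A" and add: "\<And>a m1 m2 t. a \<in> A \<Longrightarrow> K (\<rho> a) (m1 + m2) t = K (\<rho> a) m1 t + K (\<rho> a) m2 t"
  shows "pushk K (\<lambda>\<tau>. \<Sum>a\<in>A. if \<rho> a = \<tau> then mm a else 0) t = (\<Sum>a\<in>A. K (\<rho> a) (mm a) t)"
proof -
  define c' where "c' = (\<lambda>\<tau>. \<Sum>a\<in>A. if \<rho> a = \<tau> then mm a else 0)"
  have zero: "K \<sigma> 0 t' = 0" if sA: "\<sigma> \<in> \<rho> ` A" for \<sigma> t'
  proof -
    obtain a where a: "a \<in> A" "\<sigma> = \<rho> a" using sA by blast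
    have "K (\<rho> a) (0 + 0) t' = K (\<rho> a) 0 t' + K (\<rho> a) 0 t'" by (rule add[OF a(1)])
    thus ?thesis using a by simp
  qed
  have sub: "{\<sigma>. c' \<sigma> \<noteq> 0} \<subseteq> \<rho> ` A"
  proof
    fix \<sigma> assume "\<sigma> \<in> {\<sigma>. c' \<sigma> \<noteq> 0}"
    hence "(\<Sum>a\<in>A. if \<rho> a = \<sigma> then mm a else 0) \<noteq> 0" by (simp add: c'_def)
    then obtain a where "a \<in> A" "(if \<rho> a = \<sigma> then mm a else 0) \<noteq> 0"
      by (rule sum.not_neutral_contains_not_neutral)
    thus "\<sigma> \<in> \<rho> ` A" by (auto split: if_splits)
  qed
  have "pushk K c' t = (\<Sum>\<sigma>\<in>\<rho> ` A. K \<sigma> (c' \<sigma>) t)"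
    unfolding pushk_def
  proof (rule sum.mono_neutral_left)
    show "finite (\<rho> ` A)" using A by simp
    show "{\<sigma>. c' \<sigma> \<noteq> 0} \<subseteq> \<rho> ` A" by (rule sub)
    show "\<forall>i\<in>\<rho> ` A - {\<sigma>. c' \<sigma> \<noteq> 0}. K i (c' i) t = 0" using zero by simp
  qed
  also have "\<dots> = (\<Sum>\<sigma>\<in>\<rho> ` A. \<Sum>a\<in>A. K \<sigma> (if \<rho> a = \<sigma> then mm a else 0) t)"
  proof (rule sum.cong[OF refl])
    fix \<sigma> assume s: "\<sigma> \<in> \<rho> ` A"
    interpret ad: additive "\<lambda>m. K \<sigma> m t"
      by unfold_locales (use s add in auto)
    show "K \<sigma> (c' \<sigma>) t = (\<Sum>a\<in>A. K \<sigma> (if \<rho> a = \<sigma> then mm a else 0) t)"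
      unfolding c'_def by (rule ad.sum)
  qed
  also have "\<dots> = (\<Sum>\<sigma>\<in>\<rho> ` A. \<Sum>a\<in>A. if \<rho> a = \<sigma> then K (\<rho> a) (mm a) t else 0)"
    using zero by (intro sum.cong refl) (simp split: if_split)
  also have "\<dots> = (\<Sum>a\<in>A. \<Sum>\<sigma>\<in>\<rho> ` A. if \<rho> a = \<sigma> then K (\<rho> a) (mm a) t else 0)"
    by (rule sum.swap)
  also have "\<dots> = (\<Sum>a\<in>A. K (\<rho> a) (mm a) t)"
    by (intro sum.cong refl) (simp add: sum.delta' A)
  finally show ?thesis unfolding c'_def .
qed

lemma sum_prod: "(\<Sum>a\<in>A \<times> B. f a) = (\<Sum>x\<in>A. \<Sum>y\<in>B. f (x, y))"
  by (simp add: sum.cartesian_product)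

definition Dk :: "nat \<Rightarrow> 'g list \<Rightarrow> 'm \<Rightarrow> 'g list \<Rightarrow> 'm" where
  "Dk n \<sigma> m t = (if tl \<sigma> = t then act (inv (hd \<sigma>)) m else 0)
        + (\<Sum>i\<in>{1..<n}. if merge G i \<sigma> = t then alt_sign i m else 0)
        + (if butlast \<sigma> = t then alt_sign n m else 0)"

definition Hk :: "'g set \<Rightarrow> nat \<Rightarrow> 'g list \<Rightarrow> 'm \<Rightarrow> 'g list \<Rightarrow> 'm" where
  "Hk Cl n \<sigma> m t = (\<Sum>x\<in>Cl. \<Sum>i\<in>{0..n}. if ins i x \<sigma> = t then alt_sign i m else 0)"

definition hk :: "'g set \<Rightarrow> nat \<Rightarrow> ('g list \<Rightarrow> 'm) \<Rightarrow> 'g list \<Rightarrow> 'm" where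
  "hk Cl n c = pushk (Hk Cl n) c"

lemma chain_bd_pushk: "chain_bd G act (Suc n) c = pushk (Dk (Suc n)) c"
  by (rule ext) (simp add: chain_bd_def pushk_def Dk_def)

lemma if_alt: "(if r = t then alt_sign j y else 0) = alt_sign j (if r = t then y else 0)"
  by simp

lemma if_add: "(if b then x + y else 0) = (if b then x else 0) + (if b then y else (0::'z::comm_monoid_add))"
  by simp

lemma Dk_add: "hd \<sigma> \<in> carrier G \<Longrightarrow> Dk n \<sigma> (m1 + m2) t = Dk n \<sigma> m1 t + Dk n \<sigma> m2 t"
  unfolding Dk_def by (simp only: act_add inv_closed alt_sign_add if_add sum.distrib) (simp only: ac_simps)

lemma Hk_add: "Hk Cl n \<sigma> (m1 + m2) t = Hk Cl n \<sigma> m1 t + Hk Cl n \<sigma> m2 t"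
  unfolding Hk_def by (simp only: alt_sign_add if_add sum.distrib)

lemma chains_fin: "c \<in> chains G n \<Longrightarrow> finite {\<sigma>. c \<sigma> \<noteq> 0}" by (simp add: chains_def)
lemma chains_tup: "c \<in> chains G n \<Longrightarrow> c \<sigma> \<noteq> 0 \<Longrightarrow> \<sigma> \<in> tuples G n" by (simp add: chains_def)

lemma hk_repr:
  "hk Cl n c = (\<lambda>\<tau>. \<Sum>a\<in>{\<sigma>. c \<sigma> \<noteq> 0} \<times> Cl \<times> {0..n}. if ins (snd (snd a)) (fst (snd a)) (fst a) = \<tau> then alt_sign (snd (snd a)) (c (fst a)) else 0)"
  by (rule ext) (simp add: hk_def pushk_def Hk_def sum.cartesian_product split_beta)

lemma dhk:
  assumes c: "c \<in> chains G n" and Cl: "finite Cl" "Cl \<subseteq> carrier G"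
  shows "chain_bd G act (Suc n) (hk Cl n c) t
     = (\<Sum>\<sigma>\<in>{\<sigma>. c \<sigma> \<noteq> 0}. \<Sum>x\<in>Cl. \<Sum>i\<in>{0..n}. Dk (Suc n) (ins i x \<sigma>) (alt_sign i (c \<sigma>)) t)"
proof -
  have "chain_bd G act (Suc n) (hk Cl n c) t
     = (\<Sum>a\<in>{\<sigma>. c \<sigma> \<noteq> 0} \<times> Cl \<times> {0..n}. Dk (Suc n) (ins (snd (snd a)) (fst (snd a)) (fst a)) (alt_sign (snd (snd a)) (c (fst a))) t)"
    unfolding chain_bd_pushk hk_repr
  proof (rule pushk_lin)
    show "finite ({\<sigma>. c \<sigma> \<noteq> 0} \<times> Cl \<times> {0..n})" using chains_fin[OF c] Cl by auto
    fix a m1 m2 t assume a: "a \<in> {\<sigma>. c \<sigma> \<noteq> 0} \<times> Cl \<times> {0..n}"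
    hence "fst a \<in> tuples G n" "fst (snd a) \<in> carrier G" "snd (snd a) \<le> n"
      using chains_tup[OF c] Cl by auto
    hence "ins (snd (snd a)) (fst (snd a)) (fst a) \<in> tuples G (Suc n)" by (rule tuples_ins)
    thus "Dk (Suc n) (ins (snd (snd a)) (fst (snd a)) (fst a)) (m1 + m2) t =
       Dk (Suc n) (ins (snd (snd a)) (fst (snd a)) (fst a)) m1 t + Dk (Suc n) (ins (snd (snd a)) (fst (snd a)) (fst a)) m2 t"
      by (intro Dk_add tuples_hd)
  qed
  thus ?thesis by (simp add: sum.cartesian_product split_beta)
qed

definition fc :: "nat \<Rightarrow> 'g list \<Rightarrow> nat \<Rightarrow> 'g list" where
  "fc p \<sigma> j = (if j = 0 then tl \<sigma> else if j \<le> p then merge G j \<sigma> else butlast \<sigma>)"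
definition cf :: "'g list \<Rightarrow> nat \<Rightarrow> 'm \<Rightarrow> 'm" where
  "cf \<sigma> j m = (if j = 0 then act (inv (hd \<sigma>)) m else alt_sign j m)"

lemma Dk_split: "Dk (Suc p) \<sigma> m t = (\<Sum>j\<in>{0..Suc p}. if fc p \<sigma> j = t then cf \<sigma> j m else 0)"
proof -
  have "(\<Sum>j\<in>{0..Suc p}. if fc p \<sigma> j = t then cf \<sigma> j m else 0)
     = (if fc p \<sigma> 0 = t then cf \<sigma> 0 m else 0) + (\<Sum>j\<in>{Suc 0..p}. if fc p \<sigma> j = t then cf \<sigma> j m else 0)
       + (if fc p \<sigma> (Suc p) = t then cf \<sigma> (Suc p) m else 0)"
    by (simp add: sum.atLeast0_atMost_Suc sum.atLeast_Suc_atMost)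
  also have "(\<Sum>j\<in>{Suc 0..p}. if fc p \<sigma> j = t then cf \<sigma> j m else 0) = (\<Sum>i\<in>{1..<Suc p}. if merge G i \<sigma> = t then alt_sign i m else 0)"
    by (intro sum.cong) (auto simp: fc_def cf_def)
  finally show ?thesis by (simp add: Dk_def fc_def cf_def)
qed

lemma hkd:
  assumes c: "c \<in> chains G (Suc p)"
  shows "hk Cl p (chain_bd G act (Suc p) c) t
     = (\<Sum>\<sigma>\<in>{\<sigma>. c \<sigma> \<noteq> 0}. \<Sum>j\<in>{0..Suc p}. Hk Cl p (fc p \<sigma> j) (cf \<sigma> j (c \<sigma>)) t)"
proof -
  have "chain_bd G act (Suc p) c = (\<lambda>\<tau>. \<Sum>a\<in>{\<sigma>. c \<sigma> \<noteq> 0} \<times> {0..Suc p}. if fc p (fst a) (snd a) = \<tau> then cf (fst a) (snd a) (c (fst a)) else 0)"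
    by (rule ext) (simp only: chain_bd_pushk pushk_def Dk_split sum_prod fst_conv snd_conv)
  hence "hk Cl p (chain_bd G act (Suc p) c) t = (\<Sum>a\<in>{\<sigma>. c \<sigma> \<noteq> 0} \<times> {0..Suc p}. Hk Cl p (fc p (fst a) (snd a)) (cf (fst a) (snd a) (c (fst a))) t)"
    unfolding hk_def using chains_fin[OF c] by (simp add: pushk_lin Hk_add)
  thus ?thesis by (simp only: sum_prod fst_conv snd_conv)
qed

lemma persig:
  assumes Cl: "Cl \<subseteq> carrier G" "\<forall>h\<in>carrier G. \<forall>x\<in>Cl. h \<otimes> x \<otimes> inv h \<in> Cl"
    and s: "s \<in> tuples G (Suc p)"
  shows "(\<Sum>x\<in>Cl. \<Sum>i\<in>{0..Suc p}. Dk (Suc (Suc p)) (ins i x s) (alt_sign i m) t)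
       + (\<Sum>j\<in>{0..Suc p}. Hk Cl p (fc p s j) (cf s j m) t)
     = (\<Sum>x\<in>Cl. if s = t then act (inv x) m else 0) - (\<Sum>x\<in>Cl. if s = t then m else 0)"
proof -
  define \<Phi>0 where "\<Phi>0 g r = (if r = t then act (inv g) m else 0)" for g r
  define \<Phi>1 where "\<Phi>1 r = (if r = t then m else 0)" for r
  have hs: "hd s \<in> carrier G" using tuples_hd[OF s] .
  have first: "(\<Sum>x\<in>Cl. \<Sum>i\<in>{0..Suc p}. Dk (Suc (Suc p)) (ins i x s) (alt_sign i m) t)
     = (\<Sum>x\<in>Cl. \<Sum>i\<in>{0..Suc p}. alt_sign i (\<Phi>0 (hd (ins i x s)) (tl (ins i x s))
            + (\<Sum>j\<in>{1..Suc p}. alt_sign j (\<Phi>1 (merge G j (ins i x s))))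
            + alt_sign (Suc (Suc p)) (\<Phi>1 (butlast (ins i x s)))))"
  proof (intro sum.cong refl)
    fix x i assume x: "x \<in> Cl" and i: "i \<in> {0..Suc p}"
    have "hd (ins i x s) \<in> carrier G"
      using tuples_hd[OF tuples_ins[OF s]] x i Cl by auto
    thus "Dk (Suc (Suc p)) (ins i x s) (alt_sign i m) t = alt_sign i (\<Phi>0 (hd (ins i x s)) (tl (ins i x s))
            + (\<Sum>j\<in>{1..Suc p}. alt_sign j (\<Phi>1 (merge G j (ins i x s))))
            + alt_sign (Suc (Suc p)) (\<Phi>1 (butlast (ins i x s))))"
      unfolding Dk_def \<Phi>0_def \<Phi>1_def
      by (simp add: act_alt if_alt alt_alt add.commute alt_sign_add alt_sign_sum atLeastLessThanSuc_atLeastAtMost)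
  qed
  have second: "(\<Sum>j\<in>{0..Suc p}. Hk Cl p (fc p s j) (cf s j m) t)
     = (\<Sum>x\<in>Cl. \<Sum>i\<in>{0..p}. alt_sign i (\<Phi>0 (hd s) (ins i x (tl s))))
      + (\<Sum>j\<in>{1..p}. alt_sign j (\<Sum>x\<in>Cl. \<Sum>i\<in>{0..p}. alt_sign i (\<Phi>1 (ins i x (merge G j s)))))
      + alt_sign (Suc p) (\<Sum>x\<in>Cl. \<Sum>i\<in>{0..p}. alt_sign i (\<Phi>1 (ins i x (butlast s))))"
  proof -
    have "(\<Sum>j\<in>{0..Suc p}. Hk Cl p (fc p s j) (cf s j m) t)
      = Hk Cl p (fc p s 0) (cf s 0 m) t + (\<Sum>j\<in>{Suc 0..p}. Hk Cl p (fc p s j) (cf s j m) t)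
        + Hk Cl p (fc p s (Suc p)) (cf s (Suc p) m) t"
      by (simp add: sum.atLeast0_atMost_Suc sum.atLeast_Suc_atMost)
    also have "(\<Sum>j\<in>{Suc 0..p}. Hk Cl p (fc p s j) (cf s j m) t)
       = (\<Sum>j\<in>{1..p}. alt_sign j (\<Sum>x\<in>Cl. \<Sum>i\<in>{0..p}. alt_sign i (\<Phi>1 (ins i x (merge G j s)))))"
      by (intro sum.cong) (auto simp: fc_def cf_def Hk_def \<Phi>1_def if_alt alt_alt add.commute alt_sign_sum)
    also have "Hk Cl p (fc p s 0) (cf s 0 m) t = (\<Sum>x\<in>Cl. \<Sum>i\<in>{0..p}. alt_sign i (\<Phi>0 (hd s) (ins i x (tl s))))"
      by (simp add: fc_def cf_def Hk_def \<Phi>0_def if_alt)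
    also have "Hk Cl p (fc p s (Suc p)) (cf s (Suc p) m) t = alt_sign (Suc p) (\<Sum>x\<in>Cl. \<Sum>i\<in>{0..p}. alt_sign i (\<Phi>1 (ins i x (butlast s))))"
      by (simp add: fc_def cf_def Hk_def \<Phi>1_def if_alt alt_alt add.commute alt_sign_sum)
    finally show ?thesis .
  qed
  show ?thesis
    unfolding first second
    using gen[OF Cl tuples_length[OF s] tuples_set[OF s], of \<Phi>0 \<Phi>1]
    by (simp add: \<Phi>0_def \<Phi>1_def)
qed

lemma persig0:
  assumes "s \<in> tuples G 0" "Cl \<subseteq> carrier G"
  shows "(\<Sum>x\<in>Cl. \<Sum>i\<in>{0..0}. Dk (Suc 0) (ins i x s) (alt_sign i m) t)
     = (\<Sum>x\<in>Cl. if s = t then act (inv x) m else 0) - (\<Sum>x\<in>Cl. if s = t then m else 0)"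
proof -
  have "s = []" using assms by (simp add: tuples_def)
  thus ?thesis using assms
    by (auto simp: Dk_def ins_def alt_sign_def sum_subtractf subset_iff intro!: sum.cong)
qed

lemma sum_delta_P:
  assumes "finite Cl" "Cl \<subseteq> carrier G" "finite S" "\<And>t. c t \<noteq> 0 \<Longrightarrow> t \<in> S"
  shows "(\<Sum>s\<in>S. (\<Sum>x\<in>Cl. if s = t then act (inv x) (c s) else 0) - (\<Sum>x\<in>Cl. if s = t then c s else 0))
    = (\<Sum>x\<in>Cl. act (inv x) (c t)) - (\<Sum>x\<in>Cl. c t)"
proof -
  have "(\<Sum>s\<in>S. (\<Sum>x\<in>Cl. if s = t then act (inv x) (c s) else 0) - (\<Sum>x\<in>Cl. if s = t then c s else 0))
     = (\<Sum>s\<in>S. if s = t then (\<Sum>x\<in>Cl. act (inv x) (c s)) - (\<Sum>x\<in>Cl. c s) else 0)"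
    by (intro sum.cong refl) auto
  also have "\<dots> = (if t \<in> S then (\<Sum>x\<in>Cl. act (inv x) (c t)) - (\<Sum>x\<in>Cl. c t) else 0)"
    using assms(3) by (simp add: sum.delta)
  also have "\<dots> = (\<Sum>x\<in>Cl. act (inv x) (c t)) - (\<Sum>x\<in>Cl. c t)"
  proof (cases "t \<in> S")
    case False
    hence "c t = 0" using assms(4) by blast
    thus ?thesis using False assms(2) by (auto simp: act_zero subset_iff intro!: sum.neutral)
  qed simp
  finally show ?thesis .
qed

lemma hom:
  assumes Cl: "finite Cl" "Cl \<subseteq> carrier G" "\<forall>h\<in>carrier G. \<forall>x\<in>Cl. h \<otimes> x \<otimes> inv h \<in> Cl"
    and c: "c \<in> chains G n" and cyc: "chain_bd G act n c = (\<lambda>_. 0)"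
  shows "chain_bd G act (Suc n) (hk Cl n c) t = (\<Sum>x\<in>Cl. act (inv x) (c t)) - (\<Sum>x\<in>Cl. c t)"
proof (cases n)
  case 0
  have "chain_bd G act (Suc n) (hk Cl n c) t
     = (\<Sum>\<sigma>\<in>{\<sigma>. c \<sigma> \<noteq> 0}. \<Sum>x\<in>Cl. \<Sum>i\<in>{0..n}. Dk (Suc n) (ins i x \<sigma>) (alt_sign i (c \<sigma>)) t)"
    by (rule dhk[OF c Cl(1,2)])
  also have "\<dots> = (\<Sum>\<sigma>\<in>{\<sigma>. c \<sigma> \<noteq> 0}. (\<Sum>x\<in>Cl. if \<sigma> = t then act (inv x) (c \<sigma>) else 0) - (\<Sum>x\<in>Cl. if \<sigma> = t then c \<sigma> else 0))"
    unfolding 0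
    by (intro sum.cong refl persig0) (use chains_tup[OF c[unfolded 0]] Cl in auto)
  also have "\<dots> = (\<Sum>x\<in>Cl. act (inv x) (c t)) - (\<Sum>x\<in>Cl. c t)"
    by (rule sum_delta_P) (use Cl chains_fin[OF c] in auto)
  finally show ?thesis .
next
  case (Suc p)
  have z: "hk Cl p (chain_bd G act (Suc p) c) t = 0"
    using cyc Suc by (simp add: hk_def pushk_def)
  have "chain_bd G act (Suc n) (hk Cl n c) t = chain_bd G act (Suc n) (hk Cl n c) t + hk Cl p (chain_bd G act (Suc p) c) t"
    using z by simp
  also have "\<dots> = (\<Sum>\<sigma>\<in>{\<sigma>. c \<sigma> \<noteq> 0}. (\<Sum>x\<in>Cl. if \<sigma> = t then act (inv x) (c \<sigma>) else 0) - (\<Sum>x\<in>Cl. if \<sigma> = t then c \<sigma> else 0))"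
    unfolding dhk[OF c Cl(1,2), of t] hkd[OF c[unfolded Suc]] unfolding Suc sum.distrib[symmetric]
    by (intro sum.cong refl persig[OF Cl(2,3)]) (use chains_tup[OF c[unfolded Suc]] in auto)
  also have "\<dots> = (\<Sum>x\<in>Cl. act (inv x) (c t)) - (\<Sum>x\<in>Cl. c t)"
    by (rule sum_delta_P) (use Cl chains_fin[OF c] in auto)
  finally show ?thesis .
qed

lemma phi_alt: "additive \<phi> \<Longrightarrow> \<phi> (alt_sign i x) = alt_sign i (\<phi> x)"
  by (simp add: alt_sign_def additive.minus)

lemma chains_comp:
  assumes "c \<in> chains G n" "\<phi> 0 = 0"
  shows "\<phi> \<circ> c \<in> chains G n"
proof -
  have "{\<sigma>. (\<phi> \<circ> c) \<sigma> \<noteq> 0} \<subseteq> {\<sigma>. c \<sigma> \<noteq> 0}" using assms(2) by auto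
  thus ?thesis using assms unfolding chains_def by (auto intro: finite_subset)
qed

lemma bd_comm:
  assumes c: "c \<in> chains G n" and ad: "additive \<phi>"
    and com: "\<And>g m. g \<in> carrier G \<Longrightarrow> \<phi> (act g m) = act g (\<phi> m)"
  shows "chain_bd G act n (\<phi> \<circ> c) = \<phi> \<circ> chain_bd G act n c"
proof (cases n)
  case 0
  thus ?thesis using additive.zero[OF ad] by (auto simp: chain_bd_def)
next
  case (Suc p)
  let ?S = "{\<sigma>. c \<sigma> \<noteq> 0}"
  have fin: "finite ?S" using chains_fin[OF c] .
  have rep: "\<phi> \<circ> c = (\<lambda>\<tau>. \<Sum>a\<in>?S. if a = \<tau> then \<phi> (c a) else 0)"
  proof
    fix \<tau>
    show "(\<phi> \<circ> c) \<tau> = (\<Sum>a\<in>?S. if a = \<tau> then \<phi> (c a) else 0)"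
      using fin additive.zero[OF ad] by (cases "c \<tau> = 0") (auto simp: sum.delta)
  qed
  have Dcomm: "Dk (Suc p) \<sigma> (\<phi> m) t = \<phi> (Dk (Suc p) \<sigma> m t)" if "\<sigma> \<in> ?S" for \<sigma> m t
  proof -
    have "\<sigma> \<in> tuples G (Suc p)" using chains_tup[OF c] that Suc by auto
    hence h: "inv (hd \<sigma>) \<in> carrier G" using tuples_hd by auto
    show ?thesis unfolding Dk_def
      by (simp add: additive.add[OF ad] additive.sum[OF ad] if_distrib[of \<phi>] additive.zero[OF ad] phi_alt[OF ad] com[OF h] cong: if_cong)
  qed
  show ?thesis
  proof
    fix t
    have "chain_bd G act n (\<phi> \<circ> c) t = (\<Sum>a\<in>?S. Dk (Suc p) a (\<phi> (c a)) t)"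
      unfolding Suc chain_bd_pushk rep
      by (rule pushk_lin[OF fin, of "Dk (Suc p)" "\<lambda>a. a", simplified])
         (use chains_tup[OF c] Suc in \<open>auto intro!: Dk_add tuples_hd\<close>)
    also have "\<dots> = \<phi> (chain_bd G act n c t)"
      unfolding Suc chain_bd_pushk pushk_def
      by (simp add: Dcomm additive.sum[OF ad])
    finally show "chain_bd G act n (\<phi> \<circ> c) t = (\<phi> \<circ> chain_bd G act n c) t" by simp
  qed
qed

lemma hk_chains:
  assumes c: "c \<in> chains G n" and Cl: "finite Cl" "Cl \<subseteq> carrier G"
  shows "hk Cl n c \<in> chains G (Suc n)"
proof -
  let ?A = "{\<sigma>. c \<sigma> \<noteq> 0} \<times> Cl \<times> {0..n}"
  let ?r = "\<lambda>a. ins (snd (snd a)) (fst (snd a)) (fst a)"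
  have finA: "finite ?A" using chains_fin[OF c] Cl by auto
  have "\<exists>a\<in>?A. ?r a = \<tau>" if "hk Cl n c \<tau> \<noteq> 0" for \<tau>
  proof -
    from that obtain a where aA: "a \<in> ?A" and "(if ?r a = \<tau> then alt_sign (snd (snd a)) (c (fst a)) else 0) \<noteq> 0"
      unfolding hk_repr by (rule sum.not_neutral_contains_not_neutral)
    hence "?r a = \<tau>" by (cases "?r a = \<tau>") auto
    with aA show ?thesis by blast
  qed
  hence sub: "{\<tau>. hk Cl n c \<tau> \<noteq> 0} \<subseteq> ?r ` ?A" by blast
  moreover have "?r a \<in> tuples G (Suc n)" if "a \<in> ?A" for a
    using that chains_tup[OF c] Cl by (auto intro!: tuples_ins)
  ultimately show ?thesis unfolding chains_def using finA
    by (auto intro: finite_subset)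
qed

lemma cobd_comm:
  assumes ad: "additive \<phi>" and com: "\<And>g m. g \<in> carrier G \<Longrightarrow> \<phi> (act g m) = act g (\<phi> m)"
  shows "cochain_cobd G act n (\<phi> \<circ> h) = \<phi> \<circ> cochain_cobd G act n h"
proof
  fix t
  show "cochain_cobd G act n (\<phi> \<circ> h) t = (\<phi> \<circ> cochain_cobd G act n h) t"
    unfolding cochain_cobd_def
    using additive.zero[OF ad] tuples_hd[of t n]
    by (simp add: additive.add[OF ad] additive.sum[OF ad] phi_alt[OF ad] com)
qed

lemma cochains_comp: "h \<in> cochains G n \<Longrightarrow> \<phi> 0 = 0 \<Longrightarrow> \<phi> \<circ> h \<in> cochains G n"
  by (simp add: cochains_def)

lemma Hc_cochains: "Hc Cl p f \<in> cochains G p"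
  by (simp add: cochains_def Hc_def)

lemma Hc_zero: "Hc Cl p (\<lambda>_. 0) s = 0"
  by (simp add: Hc_def)

end

sublocale rep_setting \<subseteq> M: Modules.module scl by (rule module_scl)

locale main_setting = rep_setting G scl act
  for G :: "('g, 'b) monoid_scheme" (structure) and scl :: "rat \<Rightarrow> 'm::ab_group_add \<Rightarrow> 'm" and act :: "'g \<Rightarrow> 'm \<Rightarrow> 'm" +
  fixes \<iota> :: 'g
  assumes iota: "\<iota> \<in> carrier G" and finY: "finite {g \<otimes> \<iota> \<otimes> inv g | g. g \<in> carrier G}"
begin

definition "Ycl = {g \<otimes> \<iota> \<otimes> inv g | g. g \<in> carrier G}"
definition "Nop m = (\<Sum>y\<in>Ycl. act y m + m)"
definition "Pop m = (\<Sum>y\<in>Ycl. act y m) - (\<Sum>y\<in>Ycl. m)"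
definition "Qop k m = - (\<Sum>j<Suc k. scl ((1 / (2 * of_nat (card Ycl))) ^ Suc j) ((Nop ^^ j) m))"

lemma Y_fin: "finite Ycl" using finY by (simp add: Ycl_def)
lemma Y_sub: "Ycl \<subseteq> carrier G" using iota by (auto simp: Ycl_def)
lemma Y_iota: "\<iota> \<in> Ycl"
proof -
  have "\<one> \<otimes> \<iota> \<otimes> inv \<one> = \<iota>" using iota by simp
  thus ?thesis unfolding Ycl_def by force
qed
lemma Y_card: "card Ycl > 0" using Y_fin Y_iota card_gt_0_iff by blast
lemma Y_conj: "\<forall>h\<in>carrier G. \<forall>x\<in>Ycl. h \<otimes> x \<otimes> inv h \<in> Ycl"
proof (intro ballI)
  fix h x assume h: "h \<in> carrier G" and x: "x \<in> Ycl"
  then obtain g where g: "g \<in> carrier G" "x = g \<otimes> \<iota> \<otimes> inv g" by (auto simp: Ycl_def)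
  have "h \<otimes> x \<otimes> inv h = (h \<otimes> g) \<otimes> \<iota> \<otimes> inv (h \<otimes> g)"
    using g h iota by (simp add: inv_mult_group m_assoc)
  thus "h \<otimes> x \<otimes> inv h \<in> Ycl" using g h unfolding Ycl_def by blast
qed

lemma N_add: "Nop (a + b) = Nop a + Nop b"
  unfolding Nop_def using Y_sub
  by (simp add: act_add subsetD sum.distrib[symmetric] ac_simps)
lemma N_additive: "additive Nop" by unfold_locales (rule N_add)
lemma N_scl: "Nop (scl q a) = scl q (Nop a)"
  unfolding Nop_def using Y_sub
  by (simp add: act_scl subsetD M.scale_sum_right M.scale_right_distrib)
lemma N_act:
  assumes g: "g \<in> carrier G"
  shows "Nop (act g m) = act g (Nop m)"
proof -
  have "act g (Nop m) = (\<Sum>y\<in>Ycl. act g (act y m) + act g m)"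
    unfolding Nop_def using g Y_sub by (simp add: act_sum act_add)
  also have "\<dots> = (\<Sum>y\<in>Ycl. (\<lambda>z. act z (act g m) + act g m) (g \<otimes> y \<otimes> inv g))"
  proof (intro sum.cong refl)
    fix y assume "y \<in> Ycl"
    hence y: "y \<in> carrier G" using Y_sub by auto
    have "act g (act y m) = act (g \<otimes> y) m" using g y by (simp add: act_mult)
    also have "g \<otimes> y = (g \<otimes> y \<otimes> inv g) \<otimes> g" using g y by (simp add: m_assoc)
    also have "act \<dots> m = act (g \<otimes> y \<otimes> inv g) (act g m)" using g y by (simp add: act_mult)
    finally show "act g (act y m) + act g m = (\<lambda>z. act z (act g m) + act g m) (g \<otimes> y \<otimes> inv g)" by simp
  qed
  also have "\<dots> = (\<Sum>y\<in>Ycl. act y (act g m) + act g m)"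
    using sum.reindex_bij_betw[OF conj_bij[OF g Y_sub Y_conj], of "\<lambda>z. act z (act g m) + act g m"] by simp
  finally show ?thesis by (simp add: Nop_def)
qed

lemma Npow_add: "(Nop ^^ j) (a + b) = (Nop ^^ j) a + (Nop ^^ j) b"
  by (induction j) (auto simp: N_add)
lemma Npow_additive: "additive (Nop ^^ j)" by unfold_locales (rule Npow_add)
lemma Npow_scl: "(Nop ^^ j) (scl q a) = scl q ((Nop ^^ j) a)"
  by (induction j) (auto simp: N_scl)
lemma Npow_act: "g \<in> carrier G \<Longrightarrow> (Nop ^^ j) (act g m) = act g ((Nop ^^ j) m)"
  by (induction j) (auto simp: N_act)

lemma Pop_eq: "Pop m = Nop m - scl (2 * of_nat (card Ycl)) m"
proof -
  have c: "(\<Sum>y\<in>Ycl. m) = scl (of_nat (card Ycl)) m" by (rule M.sum_constant_scale)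
  have e: "scl (2 * of_nat (card Ycl)) m = scl (of_nat (card Ycl)) m + scl (of_nat (card Ycl)) m"
    by (simp only: mult_2 M.scale_left_distrib)
  have "\<And>S R :: 'z::ab_group_add. S - R = S + R - (R + R)" by simp
  thus ?thesis unfolding Pop_def Nop_def sum.distrib c e by blast
qed

lemma Q_inv:
  assumes nil: "(Nop ^^ Suc k) m = 0"
  shows "Qop k (Pop m) = m"
proof -
  define a :: rat where "a = 1 / (2 * of_nat (card Ycl))"
  have a2: "a * (2 * of_nat (card Ycl)) = 1" using Y_card by (simp add: a_def)
  define b where "b j = scl (a ^ j) ((Nop ^^ j) m)" for j
  have trm: "scl (a ^ Suc j) ((Nop ^^ j) (Pop m)) = b (Suc j) - b j" for j
  proof -
    have "(Nop ^^ j) (Pop m) = (Nop ^^ Suc j) m - scl (2 * of_nat (card Ycl)) ((Nop ^^ j) m)"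
      unfolding Pop_eq additive.diff[OF Npow_additive] Npow_scl
      by (simp add: funpow_swap1)
    hence "scl (a ^ Suc j) ((Nop ^^ j) (Pop m)) = scl (a ^ Suc j) ((Nop ^^ Suc j) m) - scl (a ^ Suc j * (2 * of_nat (card Ycl))) ((Nop ^^ j) m)"
      by (simp add: M.scale_right_diff_distrib)
    also have "a ^ Suc j * (2 * of_nat (card Ycl)) = a ^ j"
      using a2 by (simp add: mult.assoc)
    finally show ?thesis by (simp add: b_def)
  qed
  have "Qop k (Pop m) = - (\<Sum>j<Suc k. b (Suc j) - b j)"
    unfolding Qop_def a_def[symmetric] by (simp only: trm)
  also have "\<dots> = b 0 - b (Suc k)" by (simp add: sum_lessThan_telescope)
  also have "\<dots> = m" using nil by (simp add: b_def)
  finally show ?thesis .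
qed

lemma Q_add: "Qop k (x + y) = Qop k x + Qop k y"
  unfolding Qop_def by (simp add: Npow_add M.scale_right_distrib sum.distrib)
lemma Q_additive: "additive (Qop k)" by unfold_locales (rule Q_add)
lemma Q_act: "g \<in> carrier G \<Longrightarrow> Qop k (act g m) = act g (Qop k m)"
  unfolding Qop_def by (simp add: Npow_act act_minus act_diff act_sum act_scl)
lemma Q_zero: "Qop k 0 = 0" using additive.zero[OF Q_additive] .

lemma sub_sum:
  assumes "is_submodule G scl act S" "\<forall>a\<in>A. f a \<in> S"
  shows "sum f A \<in> S"
  using assms(2)
proof (induction A rule: infinite_finite_induct)
  case (infinite A) thus ?case using assms(1) by (simp add: is_submodule_def)
next
  case empty thus ?case using assms(1) by (simp add: is_submodule_def)
next
  case (insert x F) thus ?case using assms(1) by (simp add: is_submodule_def)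
qed

lemma nil:
  assumes "gr_odd G scl act \<iota>"
  shows "\<exists>k. \<forall>m. (Nop ^^ Suc k) m = 0"
proof -
  obtain F and k where
    sub: "\<forall>i\<le>k. is_submodule G scl act (F i)" and top: "F k = UNIV"
    and odd0: "\<forall>m\<in>F 0. act \<iota> m = - m"
    and step: "\<forall>i<k. \<forall>m\<in>F (Suc i). act \<iota> m + m \<in> F i"
    using assms unfolding gr_odd_def by blast
  have conj_term: "act y m + m = act g (act \<iota> (act (inv g) m) + act (inv g) m)"
    if "g \<in> carrier G" "y = g \<otimes> \<iota> \<otimes> inv g" for g y m
    using that iota by (simp add: act_add act_mult[symmetric] m_assoc)
  have step1: "Nop m \<in> F i" if i: "i < k" and m: "m \<in> F (Suc i)" for i m
    unfolding Nop_def
  proof (rule sub_sum)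
    show "is_submodule G scl act (F i)" using sub i by simp
    show "\<forall>y\<in>Ycl. act y m + m \<in> F i"
    proof
      fix y assume "y \<in> Ycl"
      then obtain g where g: "g \<in> carrier G" "y = g \<otimes> \<iota> \<otimes> inv g" by (auto simp: Ycl_def)
      have "act (inv g) m \<in> F (Suc i)" using sub i m g by (simp add: is_submodule_def)
      hence "act \<iota> (act (inv g) m) + act (inv g) m \<in> F i" using step i by blast
      hence "act g (act \<iota> (act (inv g) m) + act (inv g) m) \<in> F i" using sub i g by (simp add: is_submodule_def)
      thus "act y m + m \<in> F i" using conj_term[OF g] by simp
    qed
  qed
  have step0: "Nop m = 0" if m: "m \<in> F 0" for m
    unfolding Nop_def
  proof (rule sum.neutral, rule ballI)
    fix y assume "y \<in> Ycl"
    then obtain g where g: "g \<in> carrier G" "y = g \<otimes> \<iota> \<otimes> inv g" by (auto simp: Ycl_def)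
    have "act (inv g) m \<in> F 0" using sub m g by (simp add: is_submodule_def)
    hence "act \<iota> (act (inv g) m) + act (inv g) m = 0" using odd0 by simp
    thus "act y m + m = 0" using conj_term[OF g] g by (simp add: act_zero)
  qed
  have pw: "(Nop ^^ j) m \<in> F (k - j)" if "j \<le> k" for j m
    using that
  proof (induction j)
    case 0 thus ?case using top by simp
  next
    case (Suc j)
    hence "(Nop ^^ j) m \<in> F (Suc (k - Suc j))" by (simp add: Suc_diff_Suc)
    hence "Nop ((Nop ^^ j) m) \<in> F (k - Suc j)" using Suc.prems by (intro step1) auto
    thus ?case by simp
  qed
  have "(Nop ^^ Suc k) m = 0" for m
  proof -
    have "(Nop ^^ k) m \<in> F 0" using pw[of k m] by simp
    thus ?thesis using step0 by simp
  qed
  thus ?thesis by blast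
qed

end

context rep_setting
begin
end

context main_setting
begin

lemma invY_props:
  shows "finite ((\<lambda>x. inv x) ` Ycl)" "(\<lambda>x. inv x) ` Ycl \<subseteq> carrier G"
    "\<forall>h\<in>carrier G. \<forall>x\<in>(\<lambda>x. inv x) ` Ycl. h \<otimes> x \<otimes> inv h \<in> (\<lambda>x. inv x) ` Ycl"
proof -
  show "finite ((\<lambda>x. inv x) ` Ycl)" using Y_fin by simp
  show "(\<lambda>x. inv x) ` Ycl \<subseteq> carrier G" using Y_sub by auto
  show "\<forall>h\<in>carrier G. \<forall>x\<in>(\<lambda>x. inv x) ` Ycl. h \<otimes> x \<otimes> inv h \<in> (\<lambda>x. inv x) ` Ycl"
  proof (intro ballI)
    fix h x assume h: "h \<in> carrier G" and x: "x \<in> (\<lambda>x. inv x) ` Ycl"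
    then obtain y where y: "y \<in> Ycl" "x = inv y" by auto
    have yc: "y \<in> carrier G" using y Y_sub by auto
    have "h \<otimes> x \<otimes> inv h = inv (h \<otimes> y \<otimes> inv h)"
      using h yc y by (simp add: inv_mult_group m_assoc)
    moreover have "h \<otimes> y \<otimes> inv h \<in> Ycl" using Y_conj h y by blast
    ultimately show "h \<otimes> x \<otimes> inv h \<in> (\<lambda>x. inv x) ` Ycl" by blast
  qed
qed

lemma invY_sum: "(\<Sum>x\<in>(\<lambda>x. inv x) ` Ycl. act (inv x) m) - (\<Sum>x\<in>(\<lambda>x. inv x) ` Ycl. m) = Pop m"
proof -
  have inj: "inj_on (\<lambda>x. inv x) Ycl"
    by (rule inj_onI) (metis Y_sub subsetD inv_inv)
  have "(\<Sum>x\<in>(\<lambda>x. inv x) ` Ycl. act (inv x) m) = (\<Sum>y\<in>Ycl. act (inv (inv y)) m)"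
    by (simp add: sum.reindex[OF inj])
  also have "\<dots> = (\<Sum>y\<in>Ycl. act y m)"
    using Y_sub by (intro sum.cong refl) (auto simp: subsetD)
  finally show ?thesis
    unfolding Pop_def by (simp add: sum.reindex[OF inj])
qed

lemma homology:
  assumes nil: "\<forall>m. (Nop ^^ Suc k) m = 0"
  shows "group_homology_vanishes G act i TYPE('m)"
  unfolding group_homology_vanishes_def
proof (intro ballI impI)
  fix c :: "'g list \<Rightarrow> 'm" assume c: "c \<in> chains G i" and cyc: "chain_bd G act i c = (\<lambda>_. 0)"
  let ?b = "Qop k \<circ> hk ((\<lambda>x. inv x) ` Ycl) i c"
  have "?b \<in> chains G (Suc i)"
    by (rule chains_comp[where \<phi>="Qop k", OF hk_chains[OF c invY_props(1,2)] Q_zero])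
  moreover have "chain_bd G act (Suc i) ?b = c"
  proof
    fix t
    have "chain_bd G act (Suc i) ?b t = Qop k (chain_bd G act (Suc i) (hk ((\<lambda>x. inv x) ` Ycl) i c) t)"
      using bd_comm[OF hk_chains[OF c invY_props(1,2)] Q_additive Q_act] by simp
    also have "\<dots> = Qop k (Pop (c t))"
      unfolding hom[OF invY_props c cyc] invY_sum ..
    also have "\<dots> = c t" using Q_inv nil by blast
    finally show "chain_bd G act (Suc i) ?b t = c t" .
  qed
  ultimately show "\<exists>b\<in>chains G (Suc i). chain_bd G act (Suc i) b = c" by blast
qed

lemma cohomology:
  assumes nil: "\<forall>m. (Nop ^^ Suc k) m = 0"
  shows "group_cohomology_vanishes G act i TYPE('m)"
  unfolding group_cohomology_vanishes_def
proof (intro ballI impI)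
  fix f :: "'g list \<Rightarrow> 'm" assume f: "f \<in> cochains G i" and cyc: "cochain_cobd G act i f = (\<lambda>_. 0)"
  have Qi: "Qop k (Pop m) = m" for m using Q_inv nil by blast
  show "case i of 0 \<Rightarrow> f = (\<lambda>_. 0) | Suc j \<Rightarrow> \<exists>h\<in>cochains G j. cochain_cobd G act j h = f"
  proof (cases i)
    case 0
    have "f s = 0" for s
    proof (cases "s = []")
      case True
      have "Pop (f []) = Hc Ycl 0 (cochain_cobd G act 0 f) []"
        unfolding coh0[OF Y_sub] Pop_def ..
      also have "\<dots> = 0" using cyc 0 by (simp add: Hc_zero)
      finally have "Pop (f []) = 0" .
      hence "f [] = Qop k 0" using Qi[of "f []"] by simp
      thus ?thesis using True Q_zero by simp
    next
      case False
      hence "s \<notin> tuples G 0" by (simp add: tuples_def)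
      thus ?thesis using f 0 by (simp add: cochains_def)
    qed
    thus ?thesis using 0 by auto
  next
    case (Suc j)
    let ?h = "Qop k \<circ> Hc Ycl j f"
    have "?h \<in> cochains G j" by (rule cochains_comp[where \<phi>="Qop k", OF Hc_cochains Q_zero])
    moreover have "cochain_cobd G act j ?h = f"
    proof
      fix s
      have "cochain_cobd G act j ?h s = Qop k (cochain_cobd G act j (Hc Ycl j f) s)"
        using cobd_comm[OF Q_additive Q_act] by simp
      also have "\<dots> = f s"
      proof (cases "s \<in> tuples G (Suc j)")
        case True
        have "cochain_cobd G act j (Hc Ycl j f) s + Hc Ycl (Suc j) (cochain_cobd G act (Suc j) f) s = Pop (f s)"
          unfolding coh[OF Y_sub Y_conj True] Pop_def ..
        moreover have "Hc Ycl (Suc j) (cochain_cobd G act (Suc j) f) s = 0"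
          using cyc Suc by (simp add: Hc_zero)
        ultimately show ?thesis using Qi by simp
      next
        case False
        thus ?thesis using f Suc Q_zero by (simp add: cochain_cobd_def cochains_def)
      qed
      finally show "cochain_cobd G act j ?h s = f s" .
    qed
    ultimately show ?thesis using Suc by auto
  qed
qed

end

lemma (in group) finite_conj:
  assumes "L \<lhd> G" "finite L" "central_mod G L \<iota>" "\<iota> \<in> carrier G"
  shows "finite {g \<otimes> \<iota> \<otimes> inv g | g. g \<in> carrier G}"
proof -
  have sub: "{g \<otimes> \<iota> \<otimes> inv g | g. g \<in> carrier G} \<subseteq> (\<lambda>l. l \<otimes> \<iota>) ` L"
  proof
    fix y assume "y \<in> {g \<otimes> \<iota> \<otimes> inv g | g. g \<in> carrier G}"
    then obtain g where g: "g \<in> carrier G" "y = g \<otimes> \<iota> \<otimes> inv g" by blast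
    have sg: "subgroup L G" using assms(1) by (rule normal_imp_subgroup)
    have Lc: "L \<subseteq> carrier G" using sg by (rule subgroup.subset)
    have "L #> g \<in> carrier (G Mod L)" using g by (auto simp: FactGroup_def RCOSETS_def)
    hence "(L #> \<iota>) <#> (L #> g) = (L #> g) <#> (L #> \<iota>)"
      using assms(3) unfolding central_mod_def by blast
    hence "L #> (\<iota> \<otimes> g) = L #> (g \<otimes> \<iota>)"
      using normal.rcos_sum[OF assms(1)] g assms(4) by simp
    moreover have "g \<otimes> \<iota> \<in> L #> (g \<otimes> \<iota>)" using g assms(4) sg by (intro rcos_self) auto
    ultimately have "g \<otimes> \<iota> \<in> L #> (\<iota> \<otimes> g)" by simp
    then obtain l where l: "l \<in> L" "g \<otimes> \<iota> = l \<otimes> (\<iota> \<otimes> g)"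
      unfolding r_coset_def by blast
    have lc: "l \<in> carrier G" using l Lc by auto
    have "y = l \<otimes> (\<iota> \<otimes> g) \<otimes> inv g" using g l by simp
    also have "\<dots> = l \<otimes> \<iota>" using lc g assms(4) by (simp add: m_assoc)
    finally show "y \<in> (\<lambda>l. l \<otimes> \<iota>) ` L" using l by blast
  qed
  show ?thesis using finite_subset[OF sub] assms(2) by blast
qed

theorem proposition3p4p5:
  fixes G :: "('g, 'b) monoid_scheme"
    and scl :: "rat \<Rightarrow> 'm::ab_group_add \<Rightarrow> 'm"
    and act :: "'g \<Rightarrow> 'm \<Rightarrow> 'm"
    and \<iota> :: 'g
  assumes "group G"
    and "\<iota> \<in> carrier G"
    and "\<exists>L. L \<lhd> G \<and> finite L \<and>
           central_mod G L \<iota>"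
    and "rat_rep G scl act"
    and "gr_odd G scl act \<iota>"
  shows "\<forall>i. group_homology_vanishes G act i TYPE('m) \<and>
             group_cohomology_vanishes G act i TYPE('m)"
proof -
  obtain L where L: "L \<lhd> G" "finite L" "central_mod G L \<iota>" using assms(3) by blast
  have fin: "finite {g \<otimes>\<^bsub>G\<^esub> \<iota> \<otimes>\<^bsub>G\<^esub> inv\<^bsub>G\<^esub> g | g. g \<in> carrier G}"
    using group.finite_conj[OF assms(1) L assms(2)] .
  have ms: "main_setting G scl act \<iota>"
    by (intro main_setting.intro rep_setting.intro main_setting_axioms.intro rep_setting_axioms.intro)
       (use assms fin in auto)
  interpret main_setting G scl act \<iota> by (rule ms)
  obtain k where nil: "\<forall>m. (Nop ^^ Suc k) m = 0" using nil[OF assms(5)] by blast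
  show ?thesis using homology[OF nil] cohomology[OF nil] by blast
qed

end
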